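(* In the setting of the context, for any $H\in\mathbb S^n$, $$\langle\widetilde{\mathcal D}(H),\widetilde{\mathcal D}^\perp(H)\rangle=2\langle\tilde\Theta\circ\hat H_{\gamma\alpha},\tilde\Theta^\perp\circ\hat H_{\gamma\alpha}\rangle\ge0,$$ with equality if and only if $\hat H_{\gamma\alpha}=0$, and $$\|H\|_F^2-\|\widetilde{\mathcal M}(H)\|_F^2=\|\mathcal P\widetilde{\mathcal D}(H)\|_F^2+\|\mathcal P^\perp\widetilde{\mathcal D}^\perp(H)\|_F^2+4\langle\tilde\Theta\circ\hat H_{\gamma\alpha},\tilde\Theta^\perp\circ\hat H_{\gamma\alpha}\rangle.$$
   Context: $\mathbb S^p$: real symmetric $p\times p$ matrices with trace inner product and Frobenius norm; $\Pi_{\mathbb S^p_+}$ projection onto the PSD cone; $\circ$ Hadamard product. $\mathcal AX=(\langle A_i,X\rangle)_i$ ($A_i\in\mathbb S^n$) surjective, $\mathcal P=\mathcal A^*(\mathcal A\mathcal A^* )^{-1}\mathcal A$, $\mathcal P^\perp=\mathrm{Id}-\mathcal P$. $Z_\star=X_\star-\sigma S_\star$ ($\sigma>0$) for a KKT point $(X_\star,y_\star,S_\star)$ of min $\langle C,X\rangle$ s.t. $\mathcal AX=b$, $X\succeq0$ / max $b^\top y$ s.t. $\mathcal A^*y+S=C$, $S\succeq0$; $r=\operatorname{rank}X_\star$, $s=\operatorname{rank}S_\star$; $Z_\star=Q_\star\operatorname{diag}(\lambda_1,\dots,\lambda_n)Q_\star^\top$ with $Q_\star$ orthogonal and $\lambda_1\ge\dots\ge\lambda_r>0=\lambda_{r+1}=\dots=\lambda_{n-s}>\lambda_{n-s+1}\ge\dots\ge\lambda_n$.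 Index sets $\alpha=\{1..r\}$, $\beta=\{r+1..n-s\}$, $\gamma=\{n-s+1..n\}$; $\hat H=Q_\star^\top HQ_\star$ with blocks $\hat H_{\alpha\alpha},\hat H_{\beta\alpha},\hat H_{\gamma\alpha},\hat H_{\beta\beta},\hat H_{\gamma\beta},\hat H_{\gamma\gamma}$. $\tilde\Theta\in\mathbb R^{s\times r}$, $\tilde\Theta_{ij}=\lambda_j/(\lambda_j-\lambda_{n-s+i})$, $\tilde\Theta^\perp=E_{s\times r}-\tilde\Theta$ (all-ones minus $\tilde\Theta$). $\widetilde{\mathcal D}(H)=Q_\star\begin{pmatrix}\hat H_{\alpha\alpha}&\hat H_{\beta\alpha}^\top&\tilde\Theta^\top\circ\hat H_{\gamma\alpha}^\top\\\hat H_{\beta\alpha}&\Pi_{\mathbb S^{|\beta|}_+}(\hat H_{\beta\beta})&0\\\tilde\Theta\circ\hat H_{\gamma\alpha}&0&0\end{pmatrix}Q_\star^\top$, $\widetilde{\mathcal D}^\perp(H)=H-\widetilde{\mathcal D}(H)$, $\widetilde{\mathcal M}(H)=\mathcal P\widetilde{\mathcal D}^\perp(H)+\mathcal P^\perp\widetilde{\mathcal D}(H)$. *)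

theory Defs
  imports "Jordan_Normal_Form.DL_Rank"
begin

definition mtrace :: "real mat \<Rightarrow> real" where
  "mtrace A = (\<Sum>i<dim_row A. A $$ (i,i))"

definition minner :: "real mat \<Rightarrow> real mat \<Rightarrow> real" where
  "minner A B = mtrace (transpose_mat A * B)"

definition fnorm :: "real mat \<Rightarrow> real" where
  "fnorm A = sqrt (minner A A)"

definition symm_mats :: "nat \<Rightarrow> real mat set" where
  "symm_mats p = {A \<in> carrier_mat p p. transpose_mat A = A}"

definition psd_mats :: "nat \<Rightarrow> real mat set" where
  "psd_mats p = {A \<in> symm_mats p. \<forall>v \<in> carrier_vec p. 0 \<le> v \<bullet> (A *\<^sub>v v)}"

definition proj_psd :: "nat \<Rightarrow> real mat \<Rightarrow> real mat" where
  "proj_psd p M = (THE Y. Y \<in> psd_mats p \<and> (\<forall>Z \<in> psd_mats p. fnorm (M - Y) \<le> fnorm (M - Z)))"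

definition hadamard :: "real mat \<Rightarrow> real mat \<Rightarrow> real mat" where
  "hadamard A B = mat (dim_row A) (dim_col A) (\<lambda>(i,j). A $$ (i,j) * B $$ (i,j))"

definition ones_mat :: "nat \<Rightarrow> nat \<Rightarrow> real mat" where
  "ones_mat s r = mat s r (\<lambda>_. 1)"

definition blk :: "real mat \<Rightarrow> nat \<Rightarrow> nat \<Rightarrow> nat \<Rightarrow> nat \<Rightarrow> real mat" where
  "blk A i0 i1 j0 j1 = mat (i1 - i0) (j1 - j0) (\<lambda>(i,j). A $$ (i + i0, j + j0))"

definition Aop :: "(nat \<Rightarrow> real mat) \<Rightarrow> nat \<Rightarrow> real mat \<Rightarrow> real vec" where
  "Aop As m X = vec m (\<lambda>i. minner (As i) X)"

definition Aadj :: "nat \<Rightarrow> (nat \<Rightarrow> real mat) \<Rightarrow> nat \<Rightarrow> real vec \<Rightarrow> real mat" where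
  "Aadj n As m y = mat n n (\<lambda>(k,l). \<Sum>i<m. y $ i * As i $$ (k,l))"

text \<open>P = A^* (A A^*)^{-1} A : the vector (A A^*)^{-1} A H is the unique solution y of (A A^*) y = A H.\<close>
definition Pproj :: "nat \<Rightarrow> (nat \<Rightarrow> real mat) \<Rightarrow> nat \<Rightarrow> real mat \<Rightarrow> real mat" where
  "Pproj n As m H = Aadj n As m
     (THE y. y \<in> carrier_vec m \<and> Aop As m (Aadj n As m y) = Aop As m H)"

definition Pperp :: "nat \<Rightarrow> (nat \<Rightarrow> real mat) \<Rightarrow> nat \<Rightarrow> real mat \<Rightarrow> real mat" where
  "Pperp n As m H = H - Pproj n As m H"

definition sdp_kkt :: "nat \<Rightarrow> (nat \<Rightarrow> real mat) \<Rightarrow> nat \<Rightarrow> real vec \<Rightarrow> real mat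
    \<Rightarrow> real mat \<Rightarrow> real vec \<Rightarrow> real mat \<Rightarrow> bool" where
  "sdp_kkt n As m b C X y S \<longleftrightarrow>
     X \<in> psd_mats n \<and> Aop As m X = b \<and>
     y \<in> carrier_vec m \<and> S \<in> psd_mats n \<and> Aadj n As m y + S = C \<and>
     minner X S = 0"

text \<open>Eigenvalues lam 0, ..., lam (n-1) correspond to lambda_1, ..., lambda_n;
  alpha = {0..<r}, beta = {r..<n-s}, gamma = {n-s..<n} (0-based).\<close>

definition Hhat :: "real mat \<Rightarrow> real mat \<Rightarrow> real mat" where
  "Hhat Q H = transpose_mat Q * H * Q"

definition Theta :: "(nat \<Rightarrow> real) \<Rightarrow> nat \<Rightarrow> nat \<Rightarrow> nat \<Rightarrow> real mat" where
  "Theta lam n r s = mat s r (\<lambda>(i,j). lam j / (lam j - lam (n - s + i)))"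

definition Theta_perp :: "(nat \<Rightarrow> real) \<Rightarrow> nat \<Rightarrow> nat \<Rightarrow> nat \<Rightarrow> real mat" where
  "Theta_perp lam n r s = ones_mat s r - Theta lam n r s"

definition H_aa :: "nat \<Rightarrow> nat \<Rightarrow> nat \<Rightarrow> real mat \<Rightarrow> real mat \<Rightarrow> real mat" where
  "H_aa n r s Q H = blk (Hhat Q H) 0 r 0 r"
definition H_ba :: "nat \<Rightarrow> nat \<Rightarrow> nat \<Rightarrow> real mat \<Rightarrow> real mat \<Rightarrow> real mat" where
  "H_ba n r s Q H = blk (Hhat Q H) r (n - s) 0 r"
definition H_ga :: "nat \<Rightarrow> nat \<Rightarrow> nat \<Rightarrow> real mat \<Rightarrow> real mat \<Rightarrow> real mat" where
  "H_ga n r s Q H = blk (Hhat Q H) (n - s) n 0 r"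
definition H_bb :: "nat \<Rightarrow> nat \<Rightarrow> nat \<Rightarrow> real mat \<Rightarrow> real mat \<Rightarrow> real mat" where
  "H_bb n r s Q H = blk (Hhat Q H) r (n - s) r (n - s)"

definition Dtilde :: "nat \<Rightarrow> nat \<Rightarrow> nat \<Rightarrow> real mat \<Rightarrow> (nat \<Rightarrow> real) \<Rightarrow> real mat \<Rightarrow> real mat" where
  "Dtilde n r s Q lam H =
    (let Haa = H_aa n r s Q H; Hba = H_ba n r s Q H;
         TG = hadamard (Theta lam n r s) (H_ga n r s Q H);
         Pbb = proj_psd (n - s - r) (H_bb n r s Q H);
         M = mat n n (\<lambda>(i,j).
               if i < r then
                 (if j < r then Haa $$ (i, j)
                  else if j < n - s then (transpose_mat Hba) $$ (i, j - r)
                  else (transpose_mat TG) $$ (i, j - (n - s)))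
               else if i < n - s then
                 (if j < r then Hba $$ (i - r, j)
                  else if j < n - s then Pbb $$ (i - r, j - r)
                  else 0)
               else
                 (if j < r then TG $$ (i - (n - s), j) else 0))
     in Q * M * transpose_mat Q)"

definition Dtilde_perp :: "nat \<Rightarrow> nat \<Rightarrow> nat \<Rightarrow> real mat \<Rightarrow> (nat \<Rightarrow> real) \<Rightarrow> real mat \<Rightarrow> real mat" where
  "Dtilde_perp n r s Q lam H = H - Dtilde n r s Q lam H"

definition Mtilde :: "(nat \<Rightarrow> real mat) \<Rightarrow> nat \<Rightarrow> nat \<Rightarrow> nat \<Rightarrow> nat \<Rightarrow> real mat \<Rightarrow> (nat \<Rightarrow> real)
    \<Rightarrow> real mat \<Rightarrow> real mat" where
  "Mtilde As m n r s Q lam H =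
     Pproj n As m (Dtilde_perp n r s Q lam H) + Pperp n As m (Dtilde n r s Q lam H)"

end

theory Submission
  imports Defs "HOL-Analysis.Function_Topology"
begin

lemma minner_entry:
  assumes "A \<in> carrier_mat p q" "B \<in> carrier_mat p q"
  shows "minner A B = (\<Sum>i<p. \<Sum>j<q. A $$ (i,j) * B $$ (i,j))"
proof -
  have "minner A B = (\<Sum>j<q. \<Sum>i<p. A $$ (i,j) * B $$ (i,j))"
    using assms unfolding minner_def mtrace_def
    by (auto simp: scalar_prod_def lessThan_atLeast0 intro!: sum.cong)
  also have "\<dots> = (\<Sum>i<p. \<Sum>j<q. A $$ (i,j) * B $$ (i,j))"
    by (rule sum.swap)
  finally show ?thesis .
qed

lemma mtrace_comm:
  assumes "A \<in> carrier_mat p q" "B \<in> carrier_mat q p"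
  shows "mtrace (A * B) = mtrace (B * A)"
proof -
  have "mtrace (A * B) = (\<Sum>i<p. \<Sum>k<q. A $$ (i,k) * B $$ (k,i))"
    using assms unfolding mtrace_def
    by (auto simp: scalar_prod_def lessThan_atLeast0 intro!: sum.cong)
  also have "\<dots> = (\<Sum>k<q. \<Sum>i<p. B $$ (k,i) * A $$ (i,k))"
    by (subst sum.swap) (simp add: mult.commute)
  also have "\<dots> = mtrace (B * A)"
    using assms unfolding mtrace_def
    by (auto simp: scalar_prod_def lessThan_atLeast0 intro!: sum.cong)
  finally show ?thesis .
qed

lemma minner_sym:
  assumes "A \<in> carrier_mat p q" "B \<in> carrier_mat p q"
  shows "minner A B = minner B A"
  using assms by (simp add: minner_entry mult.commute)

lemma minner_add_left:
  assumes "A \<in> carrier_mat p q" "B \<in> carrier_mat p q" "C \<in> carrier_mat p q"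
  shows "minner (A + B) C = minner A C + minner B C"
proof -
  have AB: "A + B \<in> carrier_mat p q" using assms by auto
  show ?thesis using assms AB
    by (simp add: minner_entry[OF AB assms(3)] minner_entry[OF assms(1,3)] minner_entry[OF assms(2,3)]
        distrib_right sum.distrib)
qed

lemma minner_add_right:
  assumes "A \<in> carrier_mat p q" "B \<in> carrier_mat p q" "C \<in> carrier_mat p q"
  shows "minner C (A + B) = minner C A + minner C B"
proof -
  have AB: "A + B \<in> carrier_mat p q" using assms by auto
  show ?thesis using assms AB
    by (simp add: minner_entry[OF assms(3) AB] minner_entry[OF assms(3,1)] minner_entry[OF assms(3,2)]
        distrib_left sum.distrib)
qed

lemma minner_diff_left:
  assumes "A \<in> carrier_mat p q" "B \<in> carrier_mat p q" "C \<in> carrier_mat p q"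
  shows "minner (A - B) C = minner A C - minner B C"
proof -
  have AB: "A - B \<in> carrier_mat p q" using assms by auto
  show ?thesis using assms AB
    by (simp add: minner_entry[OF AB assms(3)] minner_entry[OF assms(1,3)] minner_entry[OF assms(2,3)]
        left_diff_distrib sum_subtractf)
qed

lemma minner_diff_right:
  assumes "A \<in> carrier_mat p q" "B \<in> carrier_mat p q" "C \<in> carrier_mat p q"
  shows "minner C (A - B) = minner C A - minner C B"
proof -
  have AB: "A - B \<in> carrier_mat p q" using assms by auto
  show ?thesis using assms AB
    by (simp add: minner_entry[OF assms(3) AB] minner_entry[OF assms(3,1)] minner_entry[OF assms(3,2)]
        right_diff_distrib sum_subtractf)
qed

lemma minner_self_nonneg:
  assumes "A \<in> carrier_mat p q"
  shows "0 \<le> minner A A"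
  using assms by (simp add: minner_entry sum_nonneg)

lemma fnorm_sq:
  assumes "A \<in> carrier_mat p q"
  shows "(fnorm A)\<^sup>2 = minner A A"
  using minner_self_nonneg[OF assms] by (simp add: fnorm_def)

lemma minner_self_zero:
  assumes "A \<in> carrier_mat p q" "minner A A = 0"
  shows "A = 0\<^sub>m p q"
proof (rule eq_matI)
  fix i j assume ij: "i < dim_row (0\<^sub>m p q)" "j < dim_col (0\<^sub>m p q)"
  have "(\<Sum>i<p. \<Sum>j<q. A $$ (i,j) * A $$ (i,j)) = 0" using assms by (simp add: minner_entry)
  hence "\<forall>i\<in>{..<p}. (\<Sum>j<q. A $$ (i,j) * A $$ (i,j)) = 0"
    by (subst (asm) sum_nonneg_eq_0_iff) (auto intro: sum_nonneg)
  hence "\<forall>i<p. \<forall>j<q. A $$ (i,j) * A $$ (i,j) = 0"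
    by (subst (asm) sum_nonneg_eq_0_iff) auto
  thus "A $$ (i,j) = 0\<^sub>m p q $$ (i,j)" using ij by auto
qed (use assms in auto)

lemma minner_orth:
  assumes Q: "Q \<in> carrier_mat n n" and QQ: "transpose_mat Q * Q = 1\<^sub>m n"
    and M: "M \<in> carrier_mat n n" and N: "N \<in> carrier_mat n n"
  shows "minner (Q * M * transpose_mat Q) (Q * N * transpose_mat Q) = minner M N"
proof -
  have QT: "transpose_mat Q \<in> carrier_mat n n" using Q by auto
  have MT: "transpose_mat M \<in> carrier_mat n n" using M by auto
  have QM: "Q * M \<in> carrier_mat n n" using Q M by auto
  have cancel: "transpose_mat Q * (Q * X) = X" if X: "X \<in> carrier_mat n k" for X k
  proof -
    have "transpose_mat Q * (Q * X) = (transpose_mat Q * Q) * X"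
      using assoc_mult_mat[OF QT Q X] by simp
    thus ?thesis using QQ X by simp
  qed
  have t1: "transpose_mat (Q * M * transpose_mat Q) = transpose_mat (transpose_mat Q) * transpose_mat (Q * M)"
    by (rule transpose_mult[OF QM QT])
  also have "\<dots> = Q * (transpose_mat M * transpose_mat Q)"
    using transpose_mult[OF Q M] by simp
  finally have t1: "transpose_mat (Q * M * transpose_mat Q) = Q * (transpose_mat M * transpose_mat Q)" .
  have NQ: "N * transpose_mat Q \<in> carrier_mat n n" using N QT by auto
  have "transpose_mat (Q * M * transpose_mat Q) * (Q * N * transpose_mat Q)
      = Q * (transpose_mat M * (transpose_mat Q * (Q * (N * transpose_mat Q))))"
  proof -
    have X: "transpose_mat M * transpose_mat Q \<in> carrier_mat n n" using MT QT by auto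
    have Y: "Q * (N * transpose_mat Q) \<in> carrier_mat n n" using Q NQ by auto
    have "Q * N * transpose_mat Q = Q * (N * transpose_mat Q)" using Q N QT by simp
    hence "transpose_mat (Q * M * transpose_mat Q) * (Q * N * transpose_mat Q)
        = Q * (transpose_mat M * transpose_mat Q) * (Q * (N * transpose_mat Q))" unfolding t1 by simp
    also have "\<dots> = Q * ((transpose_mat M * transpose_mat Q) * (Q * (N * transpose_mat Q)))"
      by (rule assoc_mult_mat[OF Q X Y])
    also have "(transpose_mat M * transpose_mat Q) * (Q * (N * transpose_mat Q))
       = transpose_mat M * (transpose_mat Q * (Q * (N * transpose_mat Q)))"
      by (rule assoc_mult_mat[OF MT QT Y])
    finally show ?thesis .
  qed
  also have "\<dots> = Q * (transpose_mat M * (N * transpose_mat Q))"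
    using cancel[OF NQ] by simp
  finally have e: "transpose_mat (Q * M * transpose_mat Q) * (Q * N * transpose_mat Q)
      = Q * (transpose_mat M * (N * transpose_mat Q))" .
  have R: "transpose_mat M * (N * transpose_mat Q) \<in> carrier_mat n n" using MT NQ by auto
  have "mtrace (Q * (transpose_mat M * (N * transpose_mat Q)))
      = mtrace ((transpose_mat M * (N * transpose_mat Q)) * Q)"
    by (rule mtrace_comm[OF Q R])
  also have "(transpose_mat M * (N * transpose_mat Q)) * Q = transpose_mat M * (N * (transpose_mat Q * Q))"
    using assoc_mult_mat[OF MT NQ Q] assoc_mult_mat[OF N QT Q] by simp
  also have "\<dots> = transpose_mat M * N" using QQ N by simp
  finally show ?thesis unfolding minner_def e .
qed

lemma quad_form:
  assumes "A \<in> carrier_mat p p" "v \<in> carrier_vec p"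
  shows "v \<bullet> (A *\<^sub>v v) = (\<Sum>i<p. v $ i * (\<Sum>j<p. A $$ (i,j) * v $ j))"
  using assms by (auto simp: scalar_prod_def lessThan_atLeast0 intro!: sum.cong)

lemma psd_iff:
  "Y \<in> psd_mats p \<longleftrightarrow> Y \<in> carrier_mat p p \<and> (\<forall>i<p. \<forall>j<p. Y $$ (i,j) = Y $$ (j,i)) \<and>
     (\<forall>v\<in>carrier_vec p. 0 \<le> (\<Sum>i<p. v $ i * (\<Sum>j<p. Y $$ (i,j) * v $ j)))"
proof -
  have "transpose_mat Y = Y \<longleftrightarrow> (\<forall>i<p. \<forall>j<p. Y $$ (i,j) = Y $$ (j,i))" if "Y \<in> carrier_mat p p"
  proof
    assume T: "transpose_mat Y = Y"
    show "\<forall>i<p. \<forall>j<p. Y $$ (i,j) = Y $$ (j,i)"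
    proof (intro allI impI)
      fix i j assume "i<p" "j<p"
      hence "transpose_mat Y $$ (i,j) = Y $$ (j,i)" using that by auto
      thus "Y $$ (i,j) = Y $$ (j,i)" using T by simp
    qed
  next
    assume S: "\<forall>i<p. \<forall>j<p. Y $$ (i,j) = Y $$ (j,i)"
    show "transpose_mat Y = Y" by (rule eq_matI) (use S that in auto)
  qed
  thus ?thesis unfolding psd_mats_def symm_mats_def by (auto simp: quad_form)
qed

lemma psd_comb:
  assumes Y1: "Y1 \<in> psd_mats p" and Y2: "Y2 \<in> psd_mats p" and a: "0 \<le> a" and b: "0 \<le> b"
  shows "a \<cdot>\<^sub>m Y1 + b \<cdot>\<^sub>m Y2 \<in> psd_mats p"
proof -
  have c1: "Y1 \<in> carrier_mat p p" and c2: "Y2 \<in> carrier_mat p p" using Y1 Y2 psd_iff by auto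
  have "0 \<le> (\<Sum>i<p. v $ i * (\<Sum>j<p. (a \<cdot>\<^sub>m Y1 + b \<cdot>\<^sub>m Y2) $$ (i,j) * v $ j))" if v: "v \<in> carrier_vec p" for v
  proof -
    have "(\<Sum>i<p. v $ i * (\<Sum>j<p. (a \<cdot>\<^sub>m Y1 + b \<cdot>\<^sub>m Y2) $$ (i,j) * v $ j))
       = a * (\<Sum>i<p. v $ i * (\<Sum>j<p. Y1 $$ (i,j) * v $ j)) + b * (\<Sum>i<p. v $ i * (\<Sum>j<p. Y2 $$ (i,j) * v $ j))"
      using c1 c2 by (simp add: sum_distrib_left sum.distrib algebra_simps)
    moreover have "0 \<le> (\<Sum>i<p. v $ i * (\<Sum>j<p. Y1 $$ (i,j) * v $ j))" using Y1 v psd_iff by auto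
    moreover have "0 \<le> (\<Sum>i<p. v $ i * (\<Sum>j<p. Y2 $$ (i,j) * v $ j))" using Y2 v psd_iff by auto
    ultimately show ?thesis using a b by simp
  qed
  moreover have "\<forall>i<p. \<forall>j<p. (a \<cdot>\<^sub>m Y1 + b \<cdot>\<^sub>m Y2) $$ (i,j) = (a \<cdot>\<^sub>m Y1 + b \<cdot>\<^sub>m Y2) $$ (j,i)"
    using Y1 Y2 c1 c2 psd_iff by auto
  ultimately show ?thesis using c1 c2 psd_iff by auto
qed

lemma psd_zero: "0\<^sub>m p p \<in> psd_mats p"
  by (simp add: psd_iff)

lemma real_aux:
  fixes c y :: real
  assumes y: "0 \<le> y" and h: "\<forall>t\<ge>0. 0 \<le> 2 * (1 - t) * c + (1 - t)\<^sup>2 * y"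
  shows "c = 0"
proof (cases "y = 0")
  case True
  with h[rule_format, of 0] h[rule_format, of 2] show ?thesis by simp
next
  case False
  hence yp: "0 < y" using y by simp
  show ?thesis
  proof (cases "0 \<le> 1 + c / y")
    case True
    have "0 \<le> 2 * (1 - (1 + c/y)) * c + (1 - (1 + c/y))\<^sup>2 * y" using h True by blast
    also have "\<dots> = - (c * c) / y" using yp by (simp add: field_simps power2_eq_square)
    finally have "c * c \<le> 0" using yp by (simp add: divide_le_0_iff le_divide_eq)
    thus ?thesis by (simp add: mult_le_0_iff) (smt (verit) mult_le_0_iff)
  next
    case False
    hence "c < - y" using yp by (simp add: field_simps)
    moreover have "0 \<le> 2 * c + y" using h[rule_format, of 0] by simp
    ultimately show ?thesis using yp by linarith
  qed
qed

lemma entry_le_fnorm: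
  assumes A: "A \<in> carrier_mat p q" and i: "i < p" and j: "j < q"
  shows "\<bar>A $$ (i,j)\<bar> \<le> fnorm A"
proof -
  have "A $$ (i,j) * A $$ (i,j) \<le> (\<Sum>j'<q. A $$ (i,j') * A $$ (i,j'))"
    using j by (intro member_le_sum) auto
  also have "\<dots> \<le> (\<Sum>i'<p. \<Sum>j'<q. A $$ (i',j') * A $$ (i',j'))"
    using i by (intro member_le_sum[of i "{..<p}" "\<lambda>i. \<Sum>j'<q. A $$ (i,j') * A $$ (i,j')"])
       (auto intro: sum_nonneg)
  finally have "(A $$ (i,j))\<^sup>2 \<le> minner A A" using A by (simp add: minner_entry power2_eq_square)
  hence "sqrt ((A $$ (i,j))\<^sup>2) \<le> sqrt (minner A A)" by (rule real_sqrt_le_mono)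
  thus ?thesis by (simp add: fnorm_def)
qed

lemma psd_min_exists:
  assumes B: "B \<in> carrier_mat p p"
  shows "\<exists>Y\<in>psd_mats p. \<forall>Z\<in>psd_mats p. minner (B - Y) (B - Y) \<le> minner (B - Z) (B - Z)"
proof -
  define R where "R = 2 * fnorm B"
  have R0: "0 \<le> R" unfolding R_def fnorm_def using minner_self_nonneg[OF B] by simp
  define S where "S = (\<lambda>(i::nat,j::nat). if i<p \<and> j<p then {-R..R} else {0::real})"
  define K1 where "K1 = PiE UNIV S"
  define K2 where "K2 = (\<Inter>ij\<in>{..<p}\<times>{..<p}. {f::nat\<times>nat\<Rightarrow>real. f ij = f (snd ij, fst ij)})"
  define K3 where "K3 = (\<Inter>v\<in>carrier_vec p. {f::nat\<times>nat\<Rightarrow>real. 0 \<le> (\<Sum>i<p. v $ i * (\<Sum>j<p. f (i,j) * v $ j))})"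
  define K where "K = K1 \<inter> (K2 \<inter> K3)"
  have cK1: "compact K1"
  proof -
    have "compactin (product_topology (\<lambda>_. euclidean) UNIV) K1"
      unfolding K1_def compactin_PiE by (auto simp: S_def)
    thus ?thesis by (simp add: euclidean_product_topology)
  qed
  have clK2: "closed K2" unfolding K2_def
    by (intro closed_INT ballI closed_Collect_eq continuous_on_product_coordinates)
  have clK3: "closed K3" unfolding K3_def
    by (intro closed_INT ballI closed_Collect_le continuous_intros continuous_on_product_coordinates)
  have cK: "compact K" unfolding K_def using cK1 clK2 clK3 by (intro compact_Int_closed closed_Int)
  have memK: "mat p p f \<in> psd_mats p" if f: "f \<in> K" for f
  proof -
    have sym: "f (i,j) = f (j,i)" if "i<p" "j<p" for i j
      using f that unfolding K_def K2_def by auto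
    have "transpose_mat (mat p p f) = mat p p f"
      by (rule eq_matI) (auto simp: sym)
    moreover have "0 \<le> v \<bullet> (mat p p f *\<^sub>v v)" if v: "v \<in> carrier_vec p" for v
      using f v unfolding K_def K3_def by (simp add: quad_form[OF _ v])
    ultimately show ?thesis unfolding psd_mats_def symm_mats_def by auto
  qed
  define g where "g f = (\<Sum>i<p. \<Sum>j<p. (B $$ (i,j) - f (i,j))\<^sup>2)" for f :: "nat\<times>nat\<Rightarrow>real"
  have g_eq: "g f = minner (B - mat p p f) (B - mat p p f)" for f
  proof -
    have c: "B - mat p p f \<in> carrier_mat p p" using B by auto
    show ?thesis using B unfolding minner_entry[OF c c] g_def power2_eq_square
      by (intro sum.cong) auto
  qed
  have cg: "continuous_on K g" unfolding g_def
    by (intro continuous_intros continuous_on_subset[OF continuous_on_product_coordinates]) auto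
  have K0: "(\<lambda>_. 0) \<in> K"
    unfolding K_def K1_def K2_def K3_def using R0 by (auto simp: S_def PiE_def extensional_def)
  obtain f0 where f0: "f0 \<in> K" and f0min: "\<forall>f\<in>K. g f0 \<le> g f"
    using continuous_attains_inf[OF cK _ cg] K0 by blast
  show ?thesis
  proof (intro bexI[of _ "mat p p f0"] ballI)
    show "mat p p f0 \<in> psd_mats p" using memK[OF f0] .
    fix Z assume Z: "Z \<in> psd_mats p"
    have Zc: "Z \<in> carrier_mat p p" using Z unfolding psd_mats_def symm_mats_def by auto
    have Zsym: "transpose_mat Z = Z" using Z unfolding psd_mats_def symm_mats_def by auto
    show "minner (B - mat p p f0) (B - mat p p f0) \<le> minner (B - Z) (B - Z)"
    proof (cases "minner B B \<le> minner (B - Z) (B - Z)")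
      case True
      have "g (\<lambda>_. 0) = minner B B" using B by (simp add: g_def minner_entry power2_eq_square)
      thus ?thesis using f0min K0 True g_eq[of f0] by fastforce
    next
      case False
      define fZ where "fZ = (\<lambda>(i,j). if i<p \<and> j<p then Z $$ (i,j) else (0::real))"
      have matZ: "mat p p fZ = Z" using Zc by (intro eq_matI) (auto simp: fZ_def)
      have BZ: "B - Z \<in> carrier_mat p p" using B Zc by auto
      have fle: "fnorm (B - Z) \<le> fnorm B" using False unfolding fnorm_def by auto
      have bnd: "\<bar>Z $$ (i,j)\<bar> \<le> R" if "i<p" "j<p" for i j
      proof -
        have "Z $$ (i,j) = B $$ (i,j) - (B - Z) $$ (i,j)" using that B Zc by simp
        hence "\<bar>Z $$ (i,j)\<bar> \<le> \<bar>B $$ (i,j)\<bar> + \<bar>(B - Z) $$ (i,j)\<bar>" by linarith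
        also have "\<dots> \<le> fnorm B + fnorm (B - Z)"
          using entry_le_fnorm[OF B that] entry_le_fnorm[OF BZ that] by linarith
        finally show ?thesis using fle unfolding R_def by linarith
      qed
      have "fZ \<in> K1" unfolding K1_def
        using bnd by (auto simp: S_def fZ_def PiE_def extensional_def abs_le_iff) (smt (verit))
      moreover have "fZ \<in> K2" unfolding K2_def fZ_def
      proof (clarsimp)
        fix i j assume "i<p" "j<p"
        thus "Z $$ (i,j) = Z $$ (j,i)" using Zsym Zc
          by (metis carrier_matD index_transpose_mat(1))
      qed
      moreover have "fZ \<in> K3" unfolding K3_def
      proof (clarsimp)
        fix v :: "real vec" assume v: "v \<in> carrier_vec p"
        have "0 \<le> v \<bullet> (Z *\<^sub>v v)" using Z v unfolding psd_mats_def by auto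
        thus "0 \<le> (\<Sum>i<p. v $ i * (\<Sum>j<p. fZ (i,j) * v $ j))"
          using quad_form[OF Zc v] by (simp add: fZ_def)
      qed
      ultimately have "fZ \<in> K" unfolding K_def by auto
      hence "g f0 \<le> g fZ" using f0min by auto
      thus ?thesis using g_eq[of f0] g_eq[of fZ] matZ by simp
    qed
  qed
qed

lemma psd_carrier: "Y \<in> psd_mats p \<Longrightarrow> Y \<in> carrier_mat p p"
  by (simp add: psd_iff)

lemma minner_diff_entry:
  assumes "A \<in> carrier_mat p q" "B \<in> carrier_mat p q" "C \<in> carrier_mat p q" "D \<in> carrier_mat p q"
  shows "minner (A - B) (C - D) = (\<Sum>i<p. \<Sum>j<q. (A $$ (i,j) - B $$ (i,j)) * (C $$ (i,j) - D $$ (i,j)))"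
proof -
  have "A - B \<in> carrier_mat p q" "C - D \<in> carrier_mat p q" using assms by auto
  from minner_entry[OF this] show ?thesis using assms by (auto intro!: sum.cong)
qed

lemma psd_min_unique:
  assumes B: "B \<in> carrier_mat p p"
    and Y1: "Y1 \<in> psd_mats p" and m1: "\<forall>Z\<in>psd_mats p. minner (B - Y1) (B - Y1) \<le> minner (B - Z) (B - Z)"
    and Y2: "Y2 \<in> psd_mats p" and m2: "\<forall>Z\<in>psd_mats p. minner (B - Y2) (B - Y2) \<le> minner (B - Z) (B - Z)"
  shows "Y1 = Y2"
proof -
  have c1: "Y1 \<in> carrier_mat p p" and c2: "Y2 \<in> carrier_mat p p" using Y1 Y2 psd_carrier by auto
  define M where "M = (1/2) \<cdot>\<^sub>m Y1 + (1/2) \<cdot>\<^sub>m Y2"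
  have Mp: "M \<in> psd_mats p" unfolding M_def by (rule psd_comb[OF Y1 Y2]) auto
  have cM: "M \<in> carrier_mat p p" using Mp psd_carrier by auto
  let ?e1 = "\<lambda>i j. (B $$ (i,j) - Y1 $$ (i,j)) * (B $$ (i,j) - Y1 $$ (i,j))"
  let ?e2 = "\<lambda>i j. (B $$ (i,j) - Y2 $$ (i,j)) * (B $$ (i,j) - Y2 $$ (i,j))"
  let ?e3 = "\<lambda>i j. (Y1 $$ (i,j) - Y2 $$ (i,j)) * (Y1 $$ (i,j) - Y2 $$ (i,j))"
  have "minner (B - M) (B - M) = (\<Sum>i<p. \<Sum>j<p. (1/2) * ?e1 i j + (1/2) * ?e2 i j - (1/4) * ?e3 i j)"
    unfolding minner_diff_entry[OF B cM B cM] using B c1 c2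
    by (intro sum.cong refl) (auto simp: M_def algebra_simps power2_eq_square)
  also have "\<dots> = (1/2) * (\<Sum>i<p. \<Sum>j<p. ?e1 i j) + (1/2) * (\<Sum>i<p. \<Sum>j<p. ?e2 i j) - (1/4) * (\<Sum>i<p. \<Sum>j<p. ?e3 i j)"
    by (simp add: sum.distrib sum_subtractf sum_distrib_left)
  also have "\<dots> = (1/2) * minner (B - Y1) (B - Y1) + (1/2) * minner (B - Y2) (B - Y2) - (1/4) * minner (Y1 - Y2) (Y1 - Y2)"
    unfolding minner_diff_entry[OF B c1 B c1] minner_diff_entry[OF B c2 B c2] minner_diff_entry[OF c1 c2 c1 c2] ..
  finally have key: "minner (B - M) (B - M) = \<dots>" .
  have "minner (B - Y1) (B - Y1) \<le> minner (B - M) (B - M)" using m1 Mp by auto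
  moreover have "minner (B - Y1) (B - Y1) \<le> minner (B - Y2) (B - Y2)" using m1 Y2 by auto
  moreover have "minner (B - Y2) (B - Y2) \<le> minner (B - Y1) (B - Y1)" using m2 Y1 by auto
  moreover have d4: "Y1 - Y2 \<in> carrier_mat p p" using c1 c2 by auto
  ultimately have "minner (Y1 - Y2) (Y1 - Y2) \<le> 0" using key by linarith
  hence "minner (Y1 - Y2) (Y1 - Y2) = 0" using minner_self_nonneg[OF d4] by linarith
  hence Z: "Y1 - Y2 = 0\<^sub>m p p" by (rule minner_self_zero[OF d4])
  show ?thesis
  proof (rule eq_matI)
    fix i j assume ij: "i < dim_row Y2" "j < dim_col Y2"
    hence "(Y1 - Y2) $$ (i,j) = 0" using Z c2 by simp
    thus "Y1 $$ (i,j) = Y2 $$ (i,j)" using ij c1 c2 by simp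
  qed (use c1 c2 in auto)
qed

lemma proj_psd_spec:
  assumes B: "B \<in> carrier_mat p p"
  shows "proj_psd p B \<in> psd_mats p \<and>
    (\<forall>Z\<in>psd_mats p. minner (B - proj_psd p B) (B - proj_psd p B) \<le> minner (B - Z) (B - Z))"
proof -
  have iff: "fnorm (B - Y) \<le> fnorm (B - Z) \<longleftrightarrow> minner (B - Y) (B - Y) \<le> minner (B - Z) (B - Z)"
    if "Y \<in> psd_mats p" "Z \<in> psd_mats p" for Y Z
  proof -
    have "Y \<in> carrier_mat p p" "Z \<in> carrier_mat p p" using that by (auto dest: psd_carrier)
    hence "B - Y \<in> carrier_mat p p" "B - Z \<in> carrier_mat p p" using B by auto
    thus ?thesis unfolding fnorm_def using minner_self_nonneg by (simp add: real_sqrt_le_iff)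
  qed
  have ex: "\<exists>!Y. Y \<in> psd_mats p \<and> (\<forall>Z \<in> psd_mats p. fnorm (B - Y) \<le> fnorm (B - Z))"
  proof -
    obtain Y where Y: "Y \<in> psd_mats p" "\<forall>Z\<in>psd_mats p. minner (B - Y) (B - Y) \<le> minner (B - Z) (B - Z)"
      using psd_min_exists[OF B] by blast
    show ?thesis
    proof (rule ex1I[of _ Y])
      show "Y \<in> psd_mats p \<and> (\<forall>Z \<in> psd_mats p. fnorm (B - Y) \<le> fnorm (B - Z))" using Y iff by auto
      fix Y' assume "Y' \<in> psd_mats p \<and> (\<forall>Z \<in> psd_mats p. fnorm (B - Y') \<le> fnorm (B - Z))"
      hence "Y' \<in> psd_mats p" "\<forall>Z\<in>psd_mats p. minner (B - Y') (B - Y') \<le> minner (B - Z) (B - Z)" using iff by auto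
      thus "Y' = Y" using psd_min_unique[OF B _ _ Y] by blast
    qed
  qed
  from theI'[OF ex] show ?thesis unfolding proj_psd_def[symmetric] using iff by auto
qed

lemma proj_psd_orth:
  assumes B: "B \<in> carrier_mat p p"
  shows "minner (proj_psd p B) (B - proj_psd p B) = 0"
proof -
  define Y where "Y = proj_psd p B"
  have Yp: "Y \<in> psd_mats p" and mn: "\<forall>Z\<in>psd_mats p. minner (B - Y) (B - Y) \<le> minner (B - Z) (B - Z)"
    using proj_psd_spec[OF B] unfolding Y_def by auto
  have cY: "Y \<in> carrier_mat p p" using Yp psd_carrier by auto
  let ?c = "minner Y (B - Y)" and ?y = "minner Y Y"
  have BY: "B - Y \<in> carrier_mat p p" using B cY by auto
  have cYB: "minner Y (B - Y) = (\<Sum>i<p. \<Sum>j<p. Y $$ (i,j) * (B $$ (i,j) - Y $$ (i,j)))"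
    unfolding minner_entry[OF cY BY] using B cY by (auto intro!: sum.cong)
  have "0 \<le> 2 * (1 - t) * ?c + (1 - t)\<^sup>2 * ?y" if t: "0 \<le> t" for t
  proof -
    define Z where "Z = t \<cdot>\<^sub>m Y + 0 \<cdot>\<^sub>m Y"
    have Zp: "Z \<in> psd_mats p" unfolding Z_def by (rule psd_comb[OF Yp Yp t]) simp
    have cZ: "Z \<in> carrier_mat p p" using Zp psd_carrier by auto
    have "minner (B - Z) (B - Z) = (\<Sum>i<p. \<Sum>j<p.
        (B $$ (i,j) - Y $$ (i,j)) * (B $$ (i,j) - Y $$ (i,j)) + 2 * (1 - t) * (Y $$ (i,j) * (B $$ (i,j) - Y $$ (i,j)))
        + (1 - t)\<^sup>2 * (Y $$ (i,j) * Y $$ (i,j)))"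
      unfolding minner_diff_entry[OF B cZ B cZ] using cY
      by (intro sum.cong refl) (auto simp: Z_def algebra_simps power2_eq_square)
    also have "\<dots> = minner (B - Y) (B - Y) + 2 * (1 - t) * ?c + (1 - t)\<^sup>2 * ?y"
      unfolding minner_diff_entry[OF B cY B cY] minner_entry[OF cY cY] cYB using B cY
      by (simp add: sum.distrib sum_distrib_left)
    finally show ?thesis using mn Zp by fastforce
  qed
  hence "?c = 0" using real_aux[OF minner_self_nonneg[OF cY]] by blast
  thus ?thesis unfolding Y_def .
qed

lemma Aadj_carrier[simp]: "Aadj n As m u \<in> carrier_mat n n"
  by (simp add: Aadj_def)

lemma Aop_carrier[simp]: "Aop As m X \<in> carrier_vec m"
  by (simp add: Aop_def)

lemma minner_Aadj:
  assumes As: "\<forall>k<m. As k \<in> carrier_mat n n" and u: "u \<in> carrier_vec m" and Y: "Y \<in> carrier_mat n n"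
  shows "minner (Aadj n As m u) Y = u \<bullet> Aop As m Y"
proof -
  have "minner (Aadj n As m u) Y = (\<Sum>i<n. \<Sum>j<n. (\<Sum>k<m. u $ k * As k $$ (i,j)) * Y $$ (i,j))"
    unfolding minner_entry[OF Aadj_carrier Y] by (auto simp: Aadj_def intro!: sum.cong)
  also have "\<dots> = (\<Sum>i<n. \<Sum>j<n. \<Sum>k<m. u $ k * (As k $$ (i,j) * Y $$ (i,j)))"
    by (simp add: sum_distrib_right mult.assoc)
  also have "\<dots> = (\<Sum>i<n. \<Sum>k<m. \<Sum>j<n. u $ k * (As k $$ (i,j) * Y $$ (i,j)))"
    by (rule sum.cong[OF refl]) (rule sum.swap)
  also have "\<dots> = (\<Sum>k<m. \<Sum>i<n. \<Sum>j<n. u $ k * (As k $$ (i,j) * Y $$ (i,j)))"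
    by (rule sum.swap)
  also have "\<dots> = (\<Sum>k<m. u $ k * minner (As k) Y)"
  proof (rule sum.cong[OF refl])
    fix k assume "k \<in> {..<m}"
    hence Ak: "As k \<in> carrier_mat n n" using As by auto
    show "(\<Sum>i<n. \<Sum>j<n. u $ k * (As k $$ (i,j) * Y $$ (i,j))) = u $ k * minner (As k) Y"
      unfolding minner_entry[OF Ak Y] by (simp add: sum_distrib_left)
  qed
  also have "\<dots> = u \<bullet> Aop As m Y"
    by (simp add: Aop_def scalar_prod_def lessThan_atLeast0)
  finally show ?thesis .
qed

definition Gram :: "(nat \<Rightarrow> real mat) \<Rightarrow> nat \<Rightarrow> real mat" where
  "Gram As m = mat m m (\<lambda>(i,j). minner (As i) (As j))"

lemma Gram_mult:
  assumes As: "\<forall>k<m. As k \<in> carrier_mat n n" and u: "u \<in> carrier_vec m"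
  shows "Aop As m (Aadj n As m u) = Gram As m *\<^sub>v u"
proof (rule eq_vecI)
  fix i assume i: "i < dim_vec (Gram As m *\<^sub>v u)"
  hence i: "i < m" by (simp add: Gram_def)
  have "Aop As m (Aadj n As m u) $ i = minner (As i) (Aadj n As m u)" using i by (simp add: Aop_def)
  also have "\<dots> = minner (Aadj n As m u) (As i)" using As i by (intro minner_sym) auto
  also have "\<dots> = u \<bullet> Aop As m (As i)" using As i u by (intro minner_Aadj) auto
  also have "\<dots> = (\<Sum>j<m. u $ j * minner (As j) (As i))"
    using u by (simp add: Aop_def scalar_prod_def lessThan_atLeast0)
  also have "\<dots> = (Gram As m *\<^sub>v u) $ i"
    using i u As by (auto simp: Gram_def scalar_prod_def lessThan_atLeast0 mult.commute intro!: sum.cong minner_sym)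
  finally show "Aop As m (Aadj n As m u) $ i = (Gram As m *\<^sub>v u) $ i" .
qed (simp add: Gram_def Aop_def)

lemma Gram_carrier[simp]: "Gram As m \<in> carrier_mat m m" by (simp add: Gram_def)

lemma Gram_inj:
  assumes As: "\<forall>k<m. As k \<in> symm_mats n" and surj: "Aop As m ` symm_mats n = carrier_vec m"
    and u: "u \<in> carrier_vec m" and z: "Gram As m *\<^sub>v u = 0\<^sub>v m"
  shows "u = 0\<^sub>v m"
proof -
  have Ac: "\<forall>k<m. As k \<in> carrier_mat n n" using As by (auto simp: symm_mats_def)
  have "minner (Aadj n As m u) (Aadj n As m u) = u \<bullet> (Gram As m *\<^sub>v u)"
    using minner_Aadj[OF Ac u Aadj_carrier] Gram_mult[OF Ac u] by simp
  also have "\<dots> = 0" using z u by simp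
  finally have "Aadj n As m u = 0\<^sub>m n n" by (intro minner_self_zero) auto
  have uw: "u \<bullet> w = 0" if w: "w \<in> carrier_vec m" for w
  proof -
    obtain Z where Z: "Z \<in> symm_mats n" "w = Aop As m Z" using w surj by blast
    have Zc: "Z \<in> carrier_mat n n" using Z by (simp add: symm_mats_def)
    have "u \<bullet> w = minner (Aadj n As m u) Z" using minner_Aadj[OF Ac u Zc] Z by simp
    also have "\<dots> = 0" using \<open>Aadj n As m u = 0\<^sub>m n n\<close> Zc by (simp add: minner_entry[of "0\<^sub>m n n" n n Z])
    finally show ?thesis .
  qed
  have "u \<bullet> u = 0" using uw u by simp
  hence "(\<Sum>i<m. u $ i * u $ i) = 0" using u by (simp add: scalar_prod_def lessThan_atLeast0)
  hence "\<forall>i<m. u $ i * u $ i = 0" by (subst (asm) sum_nonneg_eq_0_iff) auto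
  thus ?thesis using u by (intro eq_vecI) auto
qed

lemma Aadj_solve:
  assumes As: "\<forall>k<m. As k \<in> symm_mats n" and surj: "Aop As m ` symm_mats n = carrier_vec m"
    and w: "w \<in> carrier_vec m"
  shows "\<exists>!u. u \<in> carrier_vec m \<and> Aop As m (Aadj n As m u) = w"
proof -
  have Ac: "\<forall>k<m. As k \<in> carrier_mat n n" using As by (auto simp: symm_mats_def)
  let ?G = "Gram As m"
  have "det ?G \<noteq> 0"
  proof
    assume "det ?G = 0"
    then obtain v where "v \<in> carrier_vec m" "v \<noteq> 0\<^sub>v m" "?G *\<^sub>v v = 0\<^sub>v m"
      using det_0_iff_vec_prod_zero[OF Gram_carrier] by blast
    thus False using Gram_inj[OF As surj] by blast
  qed
  hence "?G \<in> Units (ring_mat TYPE(real) m ())" by (intro det_non_zero_imp_unit) auto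
  then obtain Gi where Gi: "Gi \<in> carrier_mat m m" "?G * Gi = 1\<^sub>m m"
    unfolding Units_def ring_mat_def by auto
  show ?thesis
  proof (rule ex1I[of _ "Gi *\<^sub>v w"])
    have e: "(?G * Gi) *\<^sub>v w = ?G *\<^sub>v (Gi *\<^sub>v w)" by (rule assoc_mult_mat_vec[OF Gram_carrier Gi(1) w])
    have "?G *\<^sub>v (Gi *\<^sub>v w) = w" unfolding e[symmetric] Gi(2) using w by simp
    thus "Gi *\<^sub>v w \<in> carrier_vec m \<and> Aop As m (Aadj n As m (Gi *\<^sub>v w)) = w"
      using Gram_mult[OF Ac] Gi w by simp
  next
    fix u assume u: "u \<in> carrier_vec m \<and> Aop As m (Aadj n As m u) = w"
    have v: "Gi *\<^sub>v w \<in> carrier_vec m" using Gi w by simp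
    have e: "(?G * Gi) *\<^sub>v w = ?G *\<^sub>v (Gi *\<^sub>v w)" by (rule assoc_mult_mat_vec[OF Gram_carrier Gi(1) w])
    have "?G *\<^sub>v (Gi *\<^sub>v w) = w" unfolding e[symmetric] Gi(2) using w by simp
    have Gu: "?G *\<^sub>v u = w" using Gram_mult[OF Ac, of u] u by simp
    have "?G *\<^sub>v (u - Gi *\<^sub>v w) = ?G *\<^sub>v u - ?G *\<^sub>v (Gi *\<^sub>v w)"
      using u v by (intro mult_minus_distrib_mat_vec[OF Gram_carrier]) simp_all
    also have "\<dots> = w - w" unfolding Gu \<open>?G *\<^sub>v (Gi *\<^sub>v w) = w\<close> ..
    also have "\<dots> = 0\<^sub>v m" using w by simp
    finally have G0: "?G *\<^sub>v (u - Gi *\<^sub>v w) = 0\<^sub>v m" .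
    have uc: "u - Gi *\<^sub>v w \<in> carrier_vec m" using u v by simp
    have D: "u - Gi *\<^sub>v w = 0\<^sub>v m" by (rule Gram_inj[OF As surj uc G0])
    show "u = Gi *\<^sub>v w"
    proof (rule eq_vecI)
      fix i assume i: "i < dim_vec (Gi *\<^sub>v w)"
      hence "(u - Gi *\<^sub>v w) $ i = 0" using D v Gi by simp
      thus "u $ i = (Gi *\<^sub>v w) $ i" using u v i by simp
    qed (use u v Gi in auto)
  qed
qed

lemma Pproj_carrier[simp]: "Pproj n As m X \<in> carrier_mat n n"
  by (simp add: Pproj_def)

lemma Pproj_spec:
  assumes As: "\<forall>k<m. As k \<in> symm_mats n" and surj: "Aop As m ` symm_mats n = carrier_vec m"
  shows "\<exists>u\<in>carrier_vec m. Pproj n As m X = Aadj n As m u \<and> Aop As m (Aadj n As m u) = Aop As m X"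
proof -
  from theI'[OF Aadj_solve[OF As surj Aop_carrier[of As m X]]]
  show ?thesis unfolding Pproj_def by blast
qed

lemma P_orth:
  assumes As: "\<forall>k<m. As k \<in> symm_mats n" and surj: "Aop As m ` symm_mats n = carrier_vec m"
    and X: "X \<in> carrier_mat n n" and Y: "Y \<in> carrier_mat n n"
  shows "minner (Pproj n As m X) (Y - Pproj n As m Y) = 0"
proof -
  have Ac: "\<forall>k<m. As k \<in> carrier_mat n n" using As by (auto simp: symm_mats_def)
  obtain u where u: "u \<in> carrier_vec m" "Pproj n As m X = Aadj n As m u"
    using Pproj_spec[OF As surj, of X] by blast
  obtain v where v: "v \<in> carrier_vec m" "Pproj n As m Y = Aadj n As m v" "Aop As m (Aadj n As m v) = Aop As m Y"
    using Pproj_spec[OF As surj, of Y] by blast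
  have "minner (Pproj n As m X) (Y - Pproj n As m Y) = minner (Aadj n As m u) Y - minner (Aadj n As m u) (Aadj n As m v)"
    unfolding u v by (rule minner_diff_right[OF Y Aadj_carrier Aadj_carrier])
  also have "\<dots> = u \<bullet> Aop As m Y - u \<bullet> Aop As m (Aadj n As m v)"
    using minner_Aadj[OF Ac u(1) Y] minner_Aadj[OF Ac u(1) Aadj_carrier] by simp
  also have "\<dots> = 0" using v(3) by simp
  finally show ?thesis .
qed

lemma sum_shift_block:
  fixes f :: "nat \<Rightarrow> real"
  assumes "b \<le> n"
  shows "(\<Sum>i<n. if a \<le> i \<and> i < b then f (i - a) else 0) = (\<Sum>i<b-a. f i)"
proof (cases "a \<le> b")
  case True
  have "(\<Sum>i<n. if a \<le> i \<and> i < b then f (i - a) else 0) = (\<Sum>i\<in>{i\<in>{..<n}. a \<le> i \<and> i < b}. f (i - a))"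
    by (subst sum.inter_filter) auto
  also have "{i\<in>{..<n}. a \<le> i \<and> i < b} = {0 + a..<(b - a) + a}" using assms True by auto
  also have "(\<Sum>i\<in>{0 + a..<(b - a) + a}. f (i - a)) = (\<Sum>i\<in>{0..<b-a}. f (i + a - a))"
    by (rule sum.shift_bounds_nat_ivl)
  also have "\<dots> = (\<Sum>i<b-a. f i)" by (simp add: lessThan_atLeast0)
  finally show ?thesis .
next
  case False
  hence "b - a = 0" by simp
  moreover have "(\<Sum>i<n. if a \<le> i \<and> i < b then f (i - a) else 0) = 0"
    using False by (intro sum.neutral) auto
  ultimately show ?thesis by simp
qed

lemma sum_shift_block2:
  fixes f :: "nat \<Rightarrow> nat \<Rightarrow> real"
  assumes "b \<le> n" "d \<le> n"
  shows "(\<Sum>i<n. \<Sum>j<n. if a \<le> i \<and> i < b then (if c \<le> j \<and> j < d then f (i - a) (j - c) else 0) else 0)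
       = (\<Sum>i<b-a. \<Sum>j<d-c. f i j)"
proof -
  have "(\<Sum>i<n. \<Sum>j<n. if a \<le> i \<and> i < b then (if c \<le> j \<and> j < d then f (i - a) (j - c) else 0) else 0)
      = (\<Sum>i<n. if a \<le> i \<and> i < b then (\<Sum>j<n. if c \<le> j \<and> j < d then f (i - a) (j - c) else 0) else 0)"
    by (intro sum.cong refl) auto
  also have "\<dots> = (\<Sum>i<n. if a \<le> i \<and> i < b then (\<Sum>j<d-c. f (i - a) j) else 0)"
  proof (rule sum.cong[OF refl])
    fix i
    show "(if a \<le> i \<and> i < b then (\<Sum>j<n. if c \<le> j \<and> j < d then f (i - a) (j - c) else 0) else 0)
        = (if a \<le> i \<and> i < b then (\<Sum>j<d-c. f (i - a) j) else 0)"
      using sum_shift_block[OF assms(2), of c "f (i - a)"] by simp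
  qed
  also have "\<dots> = (\<Sum>i<b-a. \<Sum>j<d-c. f i j)"
    using assms(1) by (rule sum_shift_block)
  finally show ?thesis .
qed

lemma Theta_dims[simp]: "dim_row (Theta lam n r s) = s" "dim_col (Theta lam n r s) = r"
  by (auto simp: Theta_def)

lemma Dtilde_inner:
  fixes n r s :: nat and Q H :: "real mat" and lam :: "nat \<Rightarrow> real"
  assumes Q: "Q \<in> carrier_mat n n" and QQ: "transpose_mat Q * Q = 1\<^sub>m n"
    and Hs: "H \<in> symm_mats n" and rs: "r + s \<le> n"
  shows "minner (Dtilde n r s Q lam H) (Dtilde_perp n r s Q lam H)
     = 2 * minner (hadamard (Theta lam n r s) (H_ga n r s Q H)) (hadamard (Theta_perp lam n r s) (H_ga n r s Q H))"
proof -
  have Hc: "H \<in> carrier_mat n n" and HT: "transpose_mat H = H" using Hs by (auto simp: symm_mats_def)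
  have QT: "transpose_mat Q \<in> carrier_mat n n" using Q by simp
  have QQT: "Q * transpose_mat Q = 1\<^sub>m n" by (rule mat_mult_left_right_inverse[OF QT Q QQ])
  define Hh where "Hh = Hhat Q H"
  have Hhc: "Hh \<in> carrier_mat n n" using Q Hc by (simp add: Hh_def Hhat_def)
  have HQ: "Hh = transpose_mat Q * (H * Q)" unfolding Hh_def Hhat_def using Q Hc QT by simp
  have "transpose_mat Hh = transpose_mat (H * Q) * transpose_mat (transpose_mat Q)"
    unfolding HQ using Q Hc by (intro transpose_mult[of _ n n _ n]) auto
  also have "\<dots> = (transpose_mat Q * transpose_mat H) * Q"
    using Q Hc by (simp add: transpose_mult[of H n n Q n])
  also have "\<dots> = Hh" unfolding HT HQ using Q Hc QT by simp
  finally have HhT: "transpose_mat Hh = Hh" .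
  have Hhsym: "Hh $$ (i,j) = Hh $$ (j,i)" if "i < n" "j < n" for i j
  proof -
    have "Hh $$ (i,j) = transpose_mat Hh $$ (i,j)" using HhT by simp
    also have "\<dots> = Hh $$ (j,i)" using that Hhc by simp
    finally show ?thesis .
  qed
  have cancel: "Q * (transpose_mat Q * X) = X" if X: "X \<in> carrier_mat n k" for X k
  proof -
    have "Q * (transpose_mat Q * X) = (Q * transpose_mat Q) * X"
      using assoc_mult_mat[OF Q QT X] by simp
    thus ?thesis using QQT X by simp
  qed
  have HQ2: "Q * Hh * transpose_mat Q = H"
  proof -
    have HQc: "H * Q \<in> carrier_mat n n" using Hc Q by simp
    have "Q * Hh * transpose_mat Q = Q * (Hh * transpose_mat Q)" by (rule assoc_mult_mat[OF Q Hhc QT])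
    also have "Hh * transpose_mat Q = transpose_mat Q * ((H * Q) * transpose_mat Q)"
      unfolding HQ by (rule assoc_mult_mat[OF QT HQc QT])
    also have "(H * Q) * transpose_mat Q = H * (Q * transpose_mat Q)" by (rule assoc_mult_mat[OF Hc Q QT])
    also have "\<dots> = H" using QQT Hc by simp
    also have "Q * (transpose_mat Q * H) = H" by (rule cancel[OF Hc])
    finally show ?thesis .
  qed
  define G where "G = H_ga n r s Q H"
  define Th where "Th = Theta lam n r s"
  define TG where "TG = hadamard Th G"
  define Hbb where "Hbb = H_bb n r s Q H"
  define Pbb where "Pbb = proj_psd (n - s - r) Hbb"
  define M where "M = mat n n (\<lambda>(i,j).
               if i < r then
                 (if j < r then H_aa n r s Q H $$ (i, j)
                  else if j < n - s then (transpose_mat (H_ba n r s Q H)) $$ (i, j - r)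
                  else (transpose_mat TG) $$ (i, j - (n - s)))
               else if i < n - s then
                 (if j < r then H_ba n r s Q H $$ (i - r, j)
                  else if j < n - s then Pbb $$ (i - r, j - r)
                  else 0)
               else
                 (if j < r then TG $$ (i - (n - s), j) else 0))"
  have D: "Dtilde n r s Q lam H = Q * M * transpose_mat Q"
    unfolding Dtilde_def Let_def M_def TG_def Pbb_def Hbb_def G_def Th_def ..
  have Mc: "M \<in> carrier_mat n n" by (simp add: M_def)
  have Hbbc: "Hbb \<in> carrier_mat (n - s - r) (n - s - r)" by (simp add: Hbb_def H_bb_def blk_def)
  have Pbbc: "Pbb \<in> carrier_mat (n - s - r) (n - s - r)"
    using proj_psd_spec[OF Hbbc] psd_carrier unfolding Pbb_def by blast
  have QMc: "Q * M * transpose_mat Q \<in> carrier_mat n n" using Q Mc by simp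
  have "minner (Dtilde n r s Q lam H) (Dtilde_perp n r s Q lam H)
      = minner (Q * M * transpose_mat Q) H - minner (Q * M * transpose_mat Q) (Q * M * transpose_mat Q)"
    unfolding Dtilde_perp_def D by (rule minner_diff_right[OF Hc QMc QMc])
  also have "\<dots> = minner M Hh - minner M M"
    using minner_orth[OF Q QQ Mc Hhc] minner_orth[OF Q QQ Mc Mc] HQ2 by simp
  also have "\<dots> = (\<Sum>i<n. \<Sum>j<n. M $$ (i,j) * (Hh $$ (i,j) - M $$ (i,j)))"
    unfolding minner_entry[OF Mc Hhc] minner_entry[OF Mc Mc]
    by (simp add: sum_subtractf right_diff_distrib)
  finally have S0: "minner (Dtilde n r s Q lam H) (Dtilde_perp n r s Q lam H)
      = (\<Sum>i<n. \<Sum>j<n. M $$ (i,j) * (Hh $$ (i,j) - M $$ (i,j)))" .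
  define phi where "phi a b = Th $$ (a,b) * G $$ (a,b) * (G $$ (a,b) - Th $$ (a,b) * G $$ (a,b))" for a b
  define P1 where "P1 a b = Pbb $$ (a,b) * (Hbb $$ (a,b) - Pbb $$ (a,b))" for a b
  have F: "M $$ (i,j) * (Hh $$ (i,j) - M $$ (i,j)) =
      (if r \<le> i \<and> i < n - s then (if r \<le> j \<and> j < n - s then P1 (i - r) (j - r) else 0) else 0)
    + (if n - s \<le> i \<and> i < n then (if 0 \<le> j \<and> j < r then phi (i - (n - s)) (j - 0) else 0) else 0)
    + (if 0 \<le> i \<and> i < r then (if n - s \<le> j \<and> j < n then phi (j - (n - s)) (i - 0) else 0) else 0)"
    if ij: "i < n" "j < n" for i j
    using ij rs Hhsym[OF ij] Hhsym[OF ij(2,1)]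
    by (auto simp: M_def P1_def phi_def TG_def hadamard_def Th_def G_def Hbb_def H_bb_def H_ga_def
        H_ba_def H_aa_def blk_def Hh_def)
  have ns: "n - (n - s) = s" using rs by simp
  have "(\<Sum>i<n. \<Sum>j<n. M $$ (i,j) * (Hh $$ (i,j) - M $$ (i,j)))
     = (\<Sum>i<n. \<Sum>j<n. (if r \<le> i \<and> i < n - s then (if r \<le> j \<and> j < n - s then P1 (i - r) (j - r) else 0) else 0))
     + (\<Sum>i<n. \<Sum>j<n. (if n - s \<le> i \<and> i < n then (if 0 \<le> j \<and> j < r then phi (i - (n - s)) (j - 0) else 0) else 0))
     + (\<Sum>i<n. \<Sum>j<n. (if 0 \<le> i \<and> i < r then (if n - s \<le> j \<and> j < n then phi (j - (n - s)) (i - 0) else 0) else 0))"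
    by (simp add: F sum.distrib)
  also have "\<dots> = (\<Sum>a<n - s - r. \<Sum>b<n - s - r. P1 a b) + (\<Sum>a<n - (n - s). \<Sum>b<r - 0. phi a b)
      + (\<Sum>b<r - 0. \<Sum>a<n - (n - s). phi a b)"
  proof -
    have "(\<Sum>i<n. \<Sum>j<n. (if 0 \<le> i \<and> i < r then (if n - s \<le> j \<and> j < n then phi (j - (n - s)) (i - 0) else 0) else 0))
        = (\<Sum>b<r - 0. \<Sum>a<n - (n - s). phi a b)"
      using sum_shift_block2[where f="\<lambda>i j. phi j i" and a=0 and b=r and c="n-s" and d=n and n=n] rs by simp
    thus ?thesis using rs by (simp only: sum_shift_block2)
  qed
  also have "(\<Sum>b<r - 0. \<Sum>a<n - (n - s). phi a b) = (\<Sum>a<n - (n - s). \<Sum>b<r - 0. phi a b)"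
    by (rule sum.swap)
  also have "(\<Sum>a<n - s - r. \<Sum>b<n - s - r. P1 a b) = minner Pbb (Hbb - Pbb)"
    unfolding P1_def using Pbbc Hbbc by (subst minner_entry[of _ "n-s-r" "n-s-r"]) (auto intro!: sum.cong)
  also have "minner Pbb (Hbb - Pbb) = 0" unfolding Pbb_def by (rule proj_psd_orth[OF Hbbc])
  finally have S1: "(\<Sum>i<n. \<Sum>j<n. M $$ (i,j) * (Hh $$ (i,j) - M $$ (i,j))) = 2 * (\<Sum>a<s. \<Sum>b<r. phi a b)"
    unfolding ns by simp
  have Thc: "Th \<in> carrier_mat s r" by (simp add: Th_def Theta_def)
  have Tpc: "Theta_perp lam n r s \<in> carrier_mat s r" unfolding Theta_perp_def ones_mat_def by (rule minus_carrier_mat) (simp add: Theta_def)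
  have Gc: "G \<in> carrier_mat s r" using rs by (simp add: G_def H_ga_def blk_def)
  have h1: "hadamard Th G \<in> carrier_mat s r" using Thc by (simp add: hadamard_def)
  have h2: "hadamard (Theta_perp lam n r s) G \<in> carrier_mat s r" using Tpc by (simp add: hadamard_def)
  have "minner (hadamard Th G) (hadamard (Theta_perp lam n r s) G) = (\<Sum>a<s. \<Sum>b<r. phi a b)"
    unfolding minner_entry[OF h1 h2] using Thc Tpc
    by (intro sum.cong refl) (auto simp: hadamard_def phi_def Theta_perp_def ones_mat_def Th_def algebra_simps)
  thus ?thesis using S0 S1 unfolding G_def Th_def by simp
qed

lemma quad_ident:
  assumes a: "a \<in> carrier_mat p q" and b: "b \<in> carrier_mat p q" and c: "c \<in> carrier_mat p q"
    and d: "d \<in> carrier_mat p q" and H: "H \<in> carrier_mat p q" and Mt: "Mt \<in> carrier_mat p q"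
    and D: "D \<in> carrier_mat p q" and E: "E \<in> carrier_mat p q"
    and eH: "\<And>i j. i < p \<Longrightarrow> j < q \<Longrightarrow> H $$ (i,j) = a $$ (i,j) + b $$ (i,j) + c $$ (i,j) + d $$ (i,j)"
    and eM: "\<And>i j. i < p \<Longrightarrow> j < q \<Longrightarrow> Mt $$ (i,j) = b $$ (i,j) + c $$ (i,j)"
    and eD: "\<And>i j. i < p \<Longrightarrow> j < q \<Longrightarrow> D $$ (i,j) = a $$ (i,j) + c $$ (i,j)"
    and eE: "\<And>i j. i < p \<Longrightarrow> j < q \<Longrightarrow> E $$ (i,j) = b $$ (i,j) + d $$ (i,j)"
    and o1: "minner a c = 0" and o2: "minner b d = 0" and o3: "minner b c = 0"
  shows "minner H H - minner Mt Mt = minner a a + minner d d + 2 * minner D E"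
proof -
  let ?e = "\<lambda>X Y i j. X $$ (i,j) * Y $$ (i,j)"
  have "minner H H - minner Mt Mt - minner a a - minner d d - 2 * minner D E
      = (\<Sum>i<p. \<Sum>j<q. ?e H H i j - ?e Mt Mt i j - ?e a a i j - ?e d d i j - 2 * ?e D E i j)"
    unfolding minner_entry[OF H H] minner_entry[OF Mt Mt] minner_entry[OF a a] minner_entry[OF d d]
      minner_entry[OF D E]
    by (simp add: sum_subtractf sum_distrib_left)
  also have "\<dots> = (\<Sum>i<p. \<Sum>j<q. 2 * ?e a c i j + 2 * ?e b d i j - 2 * ?e b c i j)"
    by (intro sum.cong refl) (simp add: eH eM eD eE algebra_simps power2_eq_square)
  also have "\<dots> = 2 * minner a c + 2 * minner b d - 2 * minner b c"
    unfolding minner_entry[OF a c] minner_entry[OF b d] minner_entry[OF b c]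
    by (simp add: sum_subtractf sum_distrib_left sum.distrib)
  finally show ?thesis using o1 o2 o3 by simp
qed

lemma had_inner:
  assumes rs: "r + s \<le> n"
  shows "minner (hadamard (Theta lam n r s) (H_ga n r s Q H)) (hadamard (Theta_perp lam n r s) (H_ga n r s Q H))
    = (\<Sum>a<s. \<Sum>b<r. Theta lam n r s $$ (a,b) * (1 - Theta lam n r s $$ (a,b)) * (H_ga n r s Q H $$ (a,b))\<^sup>2)"
proof -
  have Thc: "Theta lam n r s \<in> carrier_mat s r" by (simp add: Theta_def)
  have Tpc: "Theta_perp lam n r s \<in> carrier_mat s r"
    unfolding Theta_perp_def ones_mat_def by (rule minus_carrier_mat) (simp add: Theta_def)
  have h1: "hadamard (Theta lam n r s) (H_ga n r s Q H) \<in> carrier_mat s r" using Thc by (simp add: hadamard_def)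
  have h2: "hadamard (Theta_perp lam n r s) (H_ga n r s Q H) \<in> carrier_mat s r" using Tpc by (simp add: hadamard_def)
  show ?thesis
    unfolding minner_entry[OF h1 h2] using Thc Tpc
    by (intro sum.cong refl) (auto simp: hadamard_def Theta_perp_def ones_mat_def power2_eq_square)
qed

theorem lemma16:
  fixes n m r s :: nat and As :: "nat \<Rightarrow> real mat" and b y :: "real vec"
    and C X S Q H :: "real mat" and \<sigma> :: real and lam :: "nat \<Rightarrow> real"
  assumes As_sym: "\<forall>i<m. As i \<in> symm_mats n"
    and A_surj: "Aop As m ` symm_mats n = carrier_vec m"
    and C_sym: "C \<in> symm_mats n" and b_dim: "b \<in> carrier_vec m"
    and kkt: "sdp_kkt n As m b C X y S"
    and sigma_pos: "\<sigma> > 0"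
    and r_def: "r = vec_space.rank n X"
    and s_def: "s = vec_space.rank n S"
    and Q_carrier: "Q \<in> carrier_mat n n"
    and Q_orth: "transpose_mat Q * Q = 1\<^sub>m n"
    and Z_eig: "X - \<sigma> \<cdot>\<^sub>m S = Q * mat_diag n lam * transpose_mat Q"
    and lam_sorted: "\<forall>i j. i \<le> j \<and> j < n \<longrightarrow> lam j \<le> lam i"
    and rs_le: "r + s \<le> n"
    and lam_pos: "\<forall>i<r. lam i > 0"
    and lam_zero: "\<forall>i. r \<le> i \<and> i < n - s \<longrightarrow> lam i = 0"
    and lam_neg: "\<forall>i. n - s \<le> i \<and> i < n \<longrightarrow> lam i < 0"
    and H_sym: "H \<in> symm_mats n"
  shows "minner (Dtilde n r s Q lam H) (Dtilde_perp n r s Q lam H)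
           = 2 * minner (hadamard (Theta lam n r s) (H_ga n r s Q H))
                        (hadamard (Theta_perp lam n r s) (H_ga n r s Q H))
       \<and> 0 \<le> minner (hadamard (Theta lam n r s) (H_ga n r s Q H))
                     (hadamard (Theta_perp lam n r s) (H_ga n r s Q H))
       \<and> (minner (hadamard (Theta lam n r s) (H_ga n r s Q H))
                 (hadamard (Theta_perp lam n r s) (H_ga n r s Q H)) = 0
            \<longleftrightarrow> H_ga n r s Q H = 0\<^sub>m s r)
       \<and> (fnorm H)\<^sup>2 - (fnorm (Mtilde As m n r s Q lam H))\<^sup>2
           = (fnorm (Pproj n As m (Dtilde n r s Q lam H)))\<^sup>2
             + (fnorm (Pperp n As m (Dtilde_perp n r s Q lam H)))\<^sup>2
             + 4 * minner (hadamard (Theta lam n r s) (H_ga n r s Q H))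
                          (hadamard (Theta_perp lam n r s) (H_ga n r s Q H))"
proof -
  have Asc: "\<forall>k<m. As k \<in> carrier_mat n n" using As_sym by (auto simp: symm_mats_def)
  have Hc: "H \<in> carrier_mat n n" using H_sym by (simp add: symm_mats_def)
  let ?Th = "Theta lam n r s" and ?G = "H_ga n r s Q H"
  let ?T = "minner (hadamard ?Th ?G) (hadamard (Theta_perp lam n r s) ?G)"
  have I1: "minner (Dtilde n r s Q lam H) (Dtilde_perp n r s Q lam H) = 2 * ?T"
    by (rule Dtilde_inner[OF Q_carrier Q_orth H_sym rs_le])
  have Tsum: "?T = (\<Sum>a<s. \<Sum>b<r. ?Th $$ (a,b) * (1 - ?Th $$ (a,b)) * (?G $$ (a,b))\<^sup>2)"
    by (rule had_inner[OF rs_le])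
  have thpos: "0 < ?Th $$ (a,b) * (1 - ?Th $$ (a,b))" if ab: "a < s" "b < r" for a b
  proof -
    have l1: "0 < lam b" using lam_pos ab by auto
    have l2: "lam (n - s + a) < 0" using lam_neg[rule_format, of "n - s + a"] ab rs_le by linarith
    have e: "?Th $$ (a,b) = lam b / (lam b - lam (n - s + a))" using ab by (simp add: Theta_def)
    have "0 < lam b / (lam b - lam (n - s + a))" using l1 l2 by (intro divide_pos_pos) auto
    moreover have "lam b / (lam b - lam (n - s + a)) < 1" using l1 l2 by (subst divide_less_eq) auto
    ultimately show ?thesis unfolding e
      by (metis diff_gt_0_iff_gt mult_pos_pos)
  qed
  have terms_nonneg: "\<forall>a\<in>{..<s}. \<forall>b\<in>{..<r}. 0 \<le> ?Th $$ (a,b) * (1 - ?Th $$ (a,b)) * (?G $$ (a,b))\<^sup>2"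
  proof (intro ballI)
    fix a b assume "a \<in> {..<s}" "b \<in> {..<r}"
    hence "0 < ?Th $$ (a,b) * (1 - ?Th $$ (a,b))" using thpos by auto
    thus "0 \<le> ?Th $$ (a,b) * (1 - ?Th $$ (a,b)) * (?G $$ (a,b))\<^sup>2" by simp
  qed
  have Tnn: "0 \<le> ?T" unfolding Tsum using terms_nonneg by (intro sum_nonneg) auto
  have Gc: "?G \<in> carrier_mat s r" using rs_le by (simp add: H_ga_def blk_def)
  have Tzero: "?T = 0 \<longleftrightarrow> ?G = 0\<^sub>m s r"
  proof
    assume T0: "?T = 0"
    define t where "t a b = ?Th $$ (a,b) * (1 - ?Th $$ (a,b)) * (?G $$ (a,b))\<^sup>2" for a b
    have tn: "0 \<le> t a b" if "a < s" "b < r" for a b using terms_nonneg that unfolding t_def by auto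
    have inn: "0 \<le> (\<Sum>b<r. t a b)" if "a < s" for a using tn that by (intro sum_nonneg) auto
    have "(\<Sum>a<s. \<Sum>b<r. t a b) = 0" using T0 unfolding Tsum t_def .
    hence "\<forall>a\<in>{..<s}. (\<Sum>b<r. t a b) = 0" using inn by (subst (asm) sum_nonneg_eq_0_iff) auto
    hence S: "\<forall>a\<in>{..<s}. (\<Sum>b<r. t a b) = 0" .
    have "\<forall>a<s. \<forall>b\<in>{..<r}. t a b = 0"
    proof (intro allI impI)
      fix a assume a: "a < s"
      hence "(\<Sum>b<r. t a b) = 0" using S by auto
      thus "\<forall>b\<in>{..<r}. t a b = 0" using tn a by (subst (asm) sum_nonneg_eq_0_iff) auto
    qed
    hence z: "\<forall>a<s. \<forall>b<r. ?Th $$ (a,b) * (1 - ?Th $$ (a,b)) * (?G $$ (a,b))\<^sup>2 = 0"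
      unfolding t_def by auto
    show "?G = 0\<^sub>m s r"
    proof (rule eq_matI)
      fix a b assume ab: "a < dim_row (0\<^sub>m s r)" "b < dim_col (0\<^sub>m s r)"
      hence "a < s" "b < r" by auto
      hence "?Th $$ (a,b) * (1 - ?Th $$ (a,b)) * (?G $$ (a,b))\<^sup>2 = 0"
        and "0 < ?Th $$ (a,b) * (1 - ?Th $$ (a,b))" using z thpos[of a b] by auto
      hence "(?G $$ (a,b))\<^sup>2 = 0" by (metis mult_eq_0_iff less_irrefl)
      thus "?G $$ (a,b) = 0\<^sub>m s r $$ (a,b)" using ab by simp
    qed (use Gc in auto)
  next
    assume "?G = 0\<^sub>m s r"
    thus "?T = 0" unfolding Tsum by simp
  qed
  define D where "D = Dtilde n r s Q lam H"
  define E where "E = Dtilde_perp n r s Q lam H"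
  have Dc: "D \<in> carrier_mat n n" unfolding D_def Dtilde_def Let_def
    by (rule mult_carrier_mat[OF mult_carrier_mat[OF Q_carrier]]) (use Q_carrier in auto)
  have Ec: "E \<in> carrier_mat n n" unfolding E_def Dtilde_perp_def using Dc[unfolded D_def] by (rule minus_carrier_mat)
  have eE: "E = H - D" unfolding E_def D_def Dtilde_perp_def ..
  have pd: "\<And>X. dim_row (Pproj n As m X) = n" "\<And>X. dim_col (Pproj n As m X) = n"
    by (simp_all add: Pproj_def Aadj_def)
  have eEij: "E $$ (i,j) = H $$ (i,j) - D $$ (i,j)" if "i < n" "j < n" for i j
    using that Dc unfolding eE by simp
  let ?a = "Pproj n As m D" and ?b = "Pproj n As m E"
  let ?c = "D - Pproj n As m D" and ?d = "E - Pproj n As m E"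
  have ac: "?a \<in> carrier_mat n n" "?b \<in> carrier_mat n n" "?c \<in> carrier_mat n n" "?d \<in> carrier_mat n n"
    using Dc Ec by (auto intro!: minus_carrier_mat)
  have Mtc: "Mtilde As m n r s Q lam H \<in> carrier_mat n n"
    unfolding Mtilde_def Pperp_def D_def[symmetric] E_def[symmetric] using Dc
    by (intro add_carrier_mat minus_carrier_mat) auto
  have key: "minner H H - minner (Mtilde As m n r s Q lam H) (Mtilde As m n r s Q lam H)
      = minner ?a ?a + minner ?d ?d + 2 * minner D E"
  proof (rule quad_ident[OF ac Hc Mtc Dc Ec])
    fix i j assume ij: "i < n" "j < n"
    show "H $$ (i,j) = ?a $$ (i,j) + ?b $$ (i,j) + ?c $$ (i,j) + ?d $$ (i,j)"
      using ij Dc Ec eEij[OF ij] pd by simp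
    show "Mtilde As m n r s Q lam H $$ (i,j) = ?b $$ (i,j) + ?c $$ (i,j)"
      using ij Dc Ec pd unfolding Mtilde_def Pperp_def D_def[symmetric] E_def[symmetric] by simp
    show "D $$ (i,j) = ?a $$ (i,j) + ?c $$ (i,j)" using ij Dc pd by simp
    show "E $$ (i,j) = ?b $$ (i,j) + ?d $$ (i,j)" using ij Ec pd by simp
  next
    show "minner ?a ?c = 0" by (rule P_orth[OF As_sym A_surj Dc Dc])
    show "minner ?b ?d = 0" by (rule P_orth[OF As_sym A_surj Ec Ec])
    show "minner ?b ?c = 0" by (rule P_orth[OF As_sym A_surj Ec Dc])
  qed
  have last: "(fnorm H)\<^sup>2 - (fnorm (Mtilde As m n r s Q lam H))\<^sup>2
           = (fnorm (Pproj n As m (Dtilde n r s Q lam H)))\<^sup>2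
             + (fnorm (Pperp n As m (Dtilde_perp n r s Q lam H)))\<^sup>2 + 4 * ?T"
    unfolding fnorm_sq[OF Hc] fnorm_sq[OF Mtc] D_def[symmetric] E_def[symmetric] Pperp_def
      fnorm_sq[OF ac(1)] fnorm_sq[OF ac(4)] key
    using I1 unfolding D_def E_def by simp
  show ?thesis using I1 Tnn Tzero last by simp
qed

end
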